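(* Let $S=K[x_1,\ldots,x_n]$ be a polynomial ring over a field $K$, let $I\subseteq S$ be a squarefree monomial ideal all of whose minimal monomial generators have the same degree, let $x$ be one of the variables, and let $s$ be a positive integer. If $I^s$ has linear quotients, then $(I^x)^s$ has linear quotients.
   Context: A monomial ideal $J$ generated in a single degree, with minimal monomial generators $u_1,\ldots,u_r$, has linear quotients if there is an ordering $u_1>\cdots>u_r$ of these generators such that for each $1\le i<r$ the colon ideal $(u_1,\ldots,u_i):u_{i+1}$ is generated by a subset of the variables. Duplicate ideal: let $m_1,\ldots,m_q$ be all minimal monomial generators of $I$ divisible by $x$, and let $y$ be a new variable (adjoined to the ring) not dividing any generator of $I$. The duplicate ideal of $I$ by $x$ is $I^x=I+\big(\tfrac{m_1}{x}y,\ldots,\tfrac{m_q}{x}y\big)$; if $x$ divides no generator of $I$, then $I^x=I$. *)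

theory Defs
  imports "HOL-Library.Multiset"
begin

text \<open>Monomials in variables of type 'v are multisets of variables (count = exponent).
  Divisibility is multiset inclusion, product is multiset sum, degree is size.
  A monomial ideal of K[variables] is identified with the set of monomials it contains.\<close>

type_synonym 'v monomial = "'v multiset"

definition mideal :: "'v monomial set \<Rightarrow> 'v monomial set" where
  "mideal G = {m. \<exists>g\<in>G. g \<subseteq># m}"

definition is_monomial_ideal :: "'v monomial set \<Rightarrow> bool" where
  "is_monomial_ideal J \<longleftrightarrow> (\<exists>G. finite G \<and> J = mideal G)"

definition mingens :: "'v monomial set \<Rightarrow> 'v monomial set" where
  "mingens J = {u\<in>J. \<forall>v\<in>J. v \<subseteq># u \<longrightarrow> v = u}"

definition mvar :: "'v \<Rightarrow> 'v monomial" where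
  "mvar v = {#v#}"

definition colon :: "'v monomial set \<Rightarrow> 'v monomial \<Rightarrow> 'v monomial set" where
  "colon J u = {m. m + u \<in> J}"

definition mpow :: "'v monomial set \<Rightarrow> nat \<Rightarrow> 'v monomial set" where
  "mpow J s = mideal {sum_list us | us. length us = s \<and> set us \<subseteq> J}"

definition squarefree_mideal :: "'v monomial set \<Rightarrow> bool" where
  "squarefree_mideal J \<longleftrightarrow> (\<forall>u\<in>mingens J. \<forall>v. count u v \<le> 1)"

definition equigenerated :: "'v monomial set \<Rightarrow> bool" where
  "equigenerated J \<longleftrightarrow> (\<exists>d. \<forall>u\<in>mingens J. size u = d)"

definition linear_quotients :: "'v monomial set \<Rightarrow> bool" where
  "linear_quotients J \<longleftrightarrow>
     (\<exists>us. distinct us \<and> set us = mingens J \<and>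
        (\<forall>i. 0 < i \<and> i < length us \<longrightarrow>
           (\<exists>T. colon (mideal (set (take i us))) (us ! i) = mideal (mvar ` T))))"

definition duplicate :: "'v monomial set \<Rightarrow> 'v \<Rightarrow> 'v \<Rightarrow> 'v monomial set" where
  "duplicate J x y = mideal (mingens J \<union> {u - {#x#} + {#y#} | u. u \<in> mingens J \<and> x \<in># u})"

end

theory Submission imports Defs begin

definition psi :: "'v \<Rightarrow> 'v \<Rightarrow> 'v multiset \<Rightarrow> 'v multiset" where
  "psi x y w = image_mset (\<lambda>z. if z = y then x else z) w"

lemma count_psi: "x \<noteq> y \<Longrightarrow> count (psi x y w) z =
   (if z = x then count w x + count w y else if z = y then 0 else count w z)"
  by (induction w) (auto simp: psi_def)

lemma psi_plus: "psi x y (a + b) = psi x y a + psi x y b"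
  by (simp add: psi_def)

lemma psi_mono: "a \<subseteq># b \<Longrightarrow> psi x y a \<subseteq># psi x y b"
  by (simp add: psi_def image_mset_subseteq_mono)

lemma psi_id: "x \<noteq> y \<Longrightarrow> y \<notin># a \<Longrightarrow> psi x y a = a"
  by (auto simp: multiset_eq_iff count_psi not_in_iff)

lemma size_psi: "size (psi x y w) = size w"
  by (simp add: psi_def)

lemma psi_sum_list: "psi x y (sum_list ws) = sum_list (map (psi x y) ws)"
  by (induction ws) (auto simp: psi_plus psi_def)

lemma psi_nody: "x \<noteq> y \<Longrightarrow> y \<notin># psi x y w"
  by (simp add: count_psi not_in_iff)

lemma lift_psi:
  assumes xy: "x \<noteq> y" and ay: "y \<notin># a" and sub: "a \<subseteq># psi x y q"
  shows "\<exists>q1. q1 \<subseteq># q \<and> psi x y q1 = a"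
proof -
  define mn where "mn = min (count q x) (count a x)"
  define q1 where "q1 = filter_mset (\<lambda>z. z \<noteq> x \<and> z \<noteq> y) a + replicate_mset mn x
     + replicate_mset (count a x - mn) y"
  have c: "count a z \<le> count (psi x y q) z" for z using sub by (simp add: subseteq_mset_def)
  have ay0: "count a y = 0" using ay by (simp add: not_in_iff)
  have "q1 \<subseteq># q" unfolding subseteq_mset_def
  proof
    fix z show "count q1 z \<le> count q z"
      using c[of z] c[of x] xy by (auto simp: q1_def mn_def count_psi)
  qed
  moreover have "psi x y q1 = a" unfolding multiset_eq_iff
  proof
    fix z show "count (psi x y q1) z = count a z"
      using xy ay0 by (auto simp: q1_def mn_def count_psi)
  qed
  ultimately show ?thesis by blast
qed

definition pre :: "'v \<Rightarrow> 'v \<Rightarrow> 'v monomial set \<Rightarrow> 'v monomial set" where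
  "pre x y H = {w. psi x y w \<in> H}"

definition yfree :: "'v \<Rightarrow> 'v monomial set \<Rightarrow> bool" where
  "yfree y H \<longleftrightarrow> (\<forall>g\<in>H. y \<notin># g)"

lemma mideal_pre:
  assumes xy: "x \<noteq> y" and yf: "yfree y G"
  shows "mideal (pre x y G) = pre x y (mideal G)"
proof
  show "mideal (pre x y G) \<subseteq> pre x y (mideal G)"
    by (auto simp: mideal_def pre_def intro: psi_mono)
next
  show "pre x y (mideal G) \<subseteq> mideal (pre x y G)"
  proof
    fix q assume "q \<in> pre x y (mideal G)"
    then obtain g where g: "g \<in> G" "g \<subseteq># psi x y q" by (auto simp: pre_def mideal_def)
    then obtain q1 where "q1 \<subseteq># q" "psi x y q1 = g"
      using lift_psi[OF xy _ g(2)] yf by (auto simp: yfree_def)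
    then show "q \<in> mideal (pre x y G)" using g by (auto simp: mideal_def pre_def)
  qed
qed

lemma split_psi:
  assumes xy: "x \<noteq> y"
  shows "\<forall>v\<in>set vs. y \<notin># v \<Longrightarrow> psi x y q = sum_list vs \<Longrightarrow>
     \<exists>ws. map (psi x y) ws = vs \<and> sum_list ws = q"
proof (induction vs arbitrary: q)
  case Nil
  then show ?case by (auto simp: psi_def)
next
  case (Cons v vs)
  have "v \<subseteq># psi x y q" using Cons.prems by simp
  then obtain q1 where q1: "q1 \<subseteq># q" "psi x y q1 = v"
    using lift_psi[OF xy, of v q] Cons.prems by auto
  define q2 where "q2 = q - q1"
  have qq: "q = q1 + q2" using q1 by (simp add: q2_def)
  have "psi x y q2 = sum_list vs" using Cons.prems q1 qq by (simp add: psi_plus)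
  then obtain ws where "map (psi x y) ws = vs" "sum_list ws = q2" using Cons by auto
  then show ?case using q1 qq by (intro exI[of _ "q1 # ws"]) auto
qed

definition prods :: "'v monomial set \<Rightarrow> nat \<Rightarrow> 'v monomial set" where
  "prods H s = {sum_list us | us. length us = s \<and> set us \<subseteq> H}"

lemma mpow_prods: "mpow J s = mideal (prods J s)"
  by (simp add: mpow_def prods_def)

lemma yfree_sum_list: "yfree y H \<Longrightarrow> set vs \<subseteq> H \<Longrightarrow> y \<notin># sum_list vs"
  by (induction vs) (auto simp: yfree_def)

lemma yfree_prods: "yfree y H \<Longrightarrow> yfree y (prods H s)"
proof -
  assume h: "yfree y H"
  show ?thesis unfolding yfree_def prods_def
    using yfree_sum_list[OF h] by auto
qed

lemma prods_pre:
  assumes xy: "x \<noteq> y" and yf: "yfree y G"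
  shows "prods (pre x y G) s = pre x y (prods G s)"
proof
  show "prods (pre x y G) s \<subseteq> pre x y (prods G s)"
  proof
    fix q assume "q \<in> prods (pre x y G) s"
    then obtain ws where ws: "q = sum_list ws" "length ws = s" "set ws \<subseteq> pre x y G"
      by (auto simp: prods_def)
    then show "q \<in> pre x y (prods G s)"
      by (auto simp: pre_def prods_def psi_sum_list intro!: exI[of _ "map (psi x y) ws"])
  qed
next
  show "pre x y (prods G s) \<subseteq> prods (pre x y G) s"
  proof
    fix q assume "q \<in> pre x y (prods G s)"
    then obtain vs where vs: "psi x y q = sum_list vs" "length vs = s" "set vs \<subseteq> G"
      by (auto simp: prods_def pre_def)
    then have "\<forall>v\<in>set vs. y \<notin># v" using yf by (auto simp: yfree_def)
    then obtain ws where ws: "map (psi x y) ws = vs" "sum_list ws = q"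
      using split_psi[OF xy] vs by blast
    have "set ws \<subseteq> pre x y G" using ws vs by (auto simp: pre_def)
    then show "q \<in> prods (pre x y G) s" using ws vs by (auto simp: prods_def)
  qed
qed

lemma mideal_upclosed: "a \<in> mideal H \<Longrightarrow> a \<subseteq># b \<Longrightarrow> b \<in> mideal H"
  by (auto simp: mideal_def intro: subset_mset.order_trans)

lemma mideal_self: "H \<subseteq> mideal H"
  by (auto simp: mideal_def)

lemma mideal_eqI: "A \<subseteq> mideal B \<Longrightarrow> B \<subseteq> mideal A \<Longrightarrow> mideal A = mideal B"
  unfolding mideal_def by (auto intro: subset_mset.order_trans) (blast intro: subset_mset.order_trans)+

lemma lower_list: "set vs \<subseteq> mideal D \<Longrightarrow>
   \<exists>ds. length ds = length vs \<and> set ds \<subseteq> D \<and> sum_list ds \<subseteq># sum_list vs"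
proof (induction vs)
  case Nil then show ?case by auto
next
  case (Cons v vs)
  then obtain ds where ds: "length ds = length vs" "set ds \<subseteq> D" "sum_list ds \<subseteq># sum_list vs" by auto
  obtain d where "d \<in> D" "d \<subseteq># v" using Cons.prems by (auto simp: mideal_def)
  then show ?case using ds by (intro exI[of _ "d # ds"]) (auto intro: subset_mset.add_mono)
qed

lemma mideal_prods_mideal: "mideal (prods (mideal D) s) = mideal (prods D s)"
proof (rule mideal_eqI)
  show "prods (mideal D) s \<subseteq> mideal (prods D s)"
  proof
    fix q assume "q \<in> prods (mideal D) s"
    then obtain vs where vs: "q = sum_list vs" "length vs = s" "set vs \<subseteq> mideal D"
      by (auto simp: prods_def)
    then obtain ds where "length ds = length vs" "set ds \<subseteq> D" "sum_list ds \<subseteq># sum_list vs"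
      using lower_list by blast
    then show "q \<in> mideal (prods D s)" using vs by (auto simp: mideal_def prods_def)
  qed
  show "prods D s \<subseteq> mideal (prods (mideal D) s)"
  proof
    fix q assume "q \<in> prods D s"
    then have "q \<in> prods (mideal D) s" using mideal_self[of D] by (auto simp: prods_def)
    then show "q \<in> mideal (prods (mideal D) s)" using mideal_self by blast
  qed
qed

lemma mideal_min:
  assumes "q \<in> mideal H" shows "\<exists>m\<in>mingens (mideal H). m \<subseteq># q"
proof -
  obtain m where m: "m \<in> mideal H \<and> m \<subseteq># q" and
    least: "\<forall>v. v \<in> mideal H \<and> v \<subseteq># q \<longrightarrow> size m \<le> size v"
    using ex_has_least_nat[of "\<lambda>m. m \<in> mideal H \<and> m \<subseteq># q" q size] assms by auto
  have "m \<in> mingens (mideal H)"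
    unfolding mingens_def
  proof (intro CollectI conjI ballI impI)
    show "m \<in> mideal H" using m by simp
    fix v assume v: "v \<in> mideal H" "v \<subseteq># m"
    then have "size m \<le> size v" using least m by (meson subset_mset.order_trans)
    then show "v = m" using v(2) mset_subset_size[of v m] by (auto simp: subset_mset.le_less)
  qed
  then show ?thesis using m by blast
qed

lemma mingens_sub: "mingens (mideal H) \<subseteq> H"
proof
  fix u assume u: "u \<in> mingens (mideal H)"
  then obtain g where "g \<in> H" "g \<subseteq># u" by (auto simp: mingens_def mideal_def)
  moreover then have "g = u" using u mideal_self[of H] by (auto simp: mingens_def)
  ultimately show "u \<in> H" by simp
qed

lemma mideal_mingens: "mideal (mingens (mideal H)) = mideal H"
proof (rule mideal_eqI)
  show "mingens (mideal H) \<subseteq> mideal H" by (auto simp: mingens_def)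
  show "H \<subseteq> mideal (mingens (mideal H))"
    using mideal_min mideal_self[of H] by (fastforce simp: mideal_def)
qed

lemma mingens_antichain:
  assumes "\<forall>a\<in>H. \<forall>b\<in>H. a \<subseteq># b \<longrightarrow> a = b"
  shows "mingens (mideal H) = H"
proof
  show "mingens (mideal H) \<subseteq> H" by (rule mingens_sub)
  show "H \<subseteq> mingens (mideal H)"
  proof
    fix h assume h: "h \<in> H"
    show "h \<in> mingens (mideal H)" unfolding mingens_def
    proof (intro CollectI conjI ballI impI)
      show "h \<in> mideal H" using h mideal_self by blast
      fix v assume v: "v \<in> mideal H" "v \<subseteq># h"
      then obtain g where "g \<in> H" "g \<subseteq># v" by (auto simp: mideal_def)
      then have "g = h" using assms h v(2) by (meson subset_mset.order_trans)
      then show "v = h" using v(2) \<open>g \<subseteq># v\<close> by simp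
    qed
  qed
qed



lemma dup_gens:
  assumes xy: "x \<noteq> y" and yf: "yfree y G" and sq: "\<forall>u\<in>G. \<forall>v. count u v \<le> 1"
  shows "G \<union> {u - {#x#} + {#y#} | u. u \<in> G \<and> x \<in># u} = pre x y G"
proof
  show "G \<union> {u - {#x#} + {#y#} | u. u \<in> G \<and> x \<in># u} \<subseteq> pre x y G"
  proof
    fix w assume "w \<in> G \<union> {u - {#x#} + {#y#} | u. u \<in> G \<and> x \<in># u}"
    then show "w \<in> pre x y G"
    proof
      assume "w \<in> G" then show ?thesis using psi_id[OF xy] yf by (auto simp: pre_def yfree_def)
    next
      assume "w \<in> {u - {#x#} + {#y#} | u. u \<in> G \<and> x \<in># u}"
      then obtain u where u: "w = u - {#x#} + {#y#}" "u \<in> G" "x \<in># u" by auto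
      have "count u y = 0" using u yf by (auto simp: yfree_def not_in_iff)
      then have "psi x y w = u" using u xy by (auto simp: multiset_eq_iff count_psi)
      then show ?thesis using u by (auto simp: pre_def)
    qed
  qed
next
  show "pre x y G \<subseteq> G \<union> {u - {#x#} + {#y#} | u. u \<in> G \<and> x \<in># u}"
  proof
    fix w assume "w \<in> pre x y G"
    then have u: "psi x y w \<in> G" by (simp add: pre_def)
    show "w \<in> G \<union> {u - {#x#} + {#y#} | u. u \<in> G \<and> x \<in># u}"
    proof (cases "y \<in># w")
      case False then show ?thesis using u psi_id[OF xy] by auto
    next
      case True
      have c: "count (psi x y w) x \<le> 1" using sq u by blast
      have "count w y > 0" using True by simp
      moreover have "count w x + count w y \<le> 1" using c xy by (simp add: count_psi)
      ultimately have "count w y = 1" "count w x = 0" by arith+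
      then have "w = psi x y w - {#x#} + {#y#}" "x \<in># psi x y w"
        using xy by (auto simp: multiset_eq_iff count_psi simp flip: count_greater_zero_iff)
      then show ?thesis using u by blast
    qed
  qed
qed

lemma mingens_mpow_dup:
  assumes mi: "is_monomial_ideal I" and sq: "squarefree_mideal I" and xy: "x \<noteq> y"
    and yI: "\<forall>u\<in>mingens I. y \<notin># u"
  shows "mingens (mpow (duplicate I x y) s) = pre x y (mingens (mpow I s))"
    and "yfree y (mingens (mpow I s))"
proof -
  define G where "G = mingens I"
  obtain G0 where "I = mideal G0" using mi by (auto simp: is_monomial_ideal_def)
  then have IG: "I = mideal G" unfolding G_def using mideal_mingens by metis
  have yf: "yfree y G" using yI by (simp add: G_def yfree_def)
  have sqG: "\<forall>u\<in>G. \<forall>v. count u v \<le> 1" using sq by (simp add: G_def squarefree_mideal_def)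
  have dup: "duplicate I x y = mideal (pre x y G)"
    unfolding duplicate_def G_def[symmetric] using dup_gens[OF xy yf sqG] by simp
  have powI: "mpow I s = mideal (prods G s)"
    unfolding mpow_prods IG by (rule mideal_prods_mideal)
  have yfp: "yfree y (prods G s)" using yf by (rule yfree_prods)
  have "mpow (duplicate I x y) s = pre x y (mideal (prods G s))"
    unfolding dup mpow_prods mideal_prods_mideal prods_pre[OF xy yf] mideal_pre[OF xy yfp] ..
  then have "mpow (duplicate I x y) s = pre x y (mpow I s)" using powI by simp
  define M where "M = mingens (mpow I s)"
  have MP: "M \<subseteq> prods G s" unfolding M_def powI by (rule mingens_sub)
  show yfM: "yfree y (mingens (mpow I s))" using yfp MP by (auto simp: yfree_def M_def)
  have "mpow I s = mideal M" unfolding M_def powI mideal_mingens ..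
  then have "mpow (duplicate I x y) s = mideal (pre x y M)"
    using \<open>mpow (duplicate I x y) s = pre x y (mpow I s)\<close> mideal_pre[OF xy yfM[folded M_def]] by simp
  moreover have "\<forall>a\<in>pre x y M. \<forall>b\<in>pre x y M. a \<subseteq># b \<longrightarrow> a = b"
  proof (intro ballI impI)
    fix a b assume ab: "a \<in> pre x y M" "b \<in> pre x y M" "a \<subseteq># b"
    then have "psi x y a \<subseteq># psi x y b" by (simp add: psi_mono)
    then have "psi x y a = psi x y b" using ab by (auto simp: pre_def M_def mingens_def)
    then have "size a = size b" by (metis size_psi)
    then show "a = b" using ab(3) by (metis mset_subset_size subset_mset.le_less nat_less_le)
  qed
  ultimately show "mingens (mpow (duplicate I x y) s) = pre x y (mingens (mpow I s))"
    using mingens_antichain M_def by metis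
qed



definition lift :: "'v \<Rightarrow> 'v \<Rightarrow> 'v monomial \<Rightarrow> nat \<Rightarrow> 'v monomial" where
  "lift x y v k = v - replicate_mset k x + replicate_mset k y"

definition Wl :: "'v \<Rightarrow> 'v \<Rightarrow> 'v monomial \<Rightarrow> 'v monomial list" where
  "Wl x y v = map (lift x y v) [0..<Suc (count v x)]"

lemma count_lift: "x \<noteq> y \<Longrightarrow> count (lift x y v k) z =
  (if z = x then count v x - k else if z = y then count v y + k else count v z)"
  by (auto simp: lift_def)

lemma set_Wl:
  assumes xy: "x \<noteq> y" and vy: "y \<notin># v"
  shows "set (Wl x y v) = {w. psi x y w = v}"
proof -
  have vy0: "count v y = 0" using vy by (simp add: not_in_iff)
  have "psi x y (lift x y v k) = v" if "k \<le> count v x" for k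
    using that xy vy0 by (auto simp: multiset_eq_iff count_psi count_lift)
  moreover have "w \<in> set (Wl x y v)" if "psi x y w = v" for w
  proof -
    have c: "count (psi x y w) z = count v z" for z using that by simp
    have "w = lift x y v (count w y)"
      unfolding multiset_eq_iff
    proof
      fix z show "count w z = count (lift x y v (count w y)) z"
        using c[of z] c[of x] c[of y] xy vy0 by (simp add: count_psi count_lift split: if_splits)
    qed
    moreover have "count w y \<le> count v x" using c[of x] xy by (simp add: count_psi)
    ultimately show ?thesis by (auto simp: Wl_def simp del: upt_Suc)
  qed
  ultimately show ?thesis by (auto simp: Wl_def simp del: upt_Suc)
qed

lemma set_concat_Wl:
  assumes xy: "x \<noteq> y"
  shows "\<forall>v\<in>set us. y \<notin># v \<Longrightarrow> set (concat (map (Wl x y) us)) = pre x y (set us)"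
  by (induction us) (auto simp: set_Wl[OF xy] pre_def)

lemma distinct_Wl:
  assumes xy: "x \<noteq> y" and vy: "y \<notin># v"
  shows "distinct (Wl x y v)"
proof -
  have "inj_on (lift x y v) {0..<Suc (count v x)}"
  proof
    fix a b assume "lift x y v a = lift x y v b"
    then have "count (lift x y v a) y = count (lift x y v b) y" by simp
    then show "a = b" using xy by (simp add: count_lift)
  qed
  then show ?thesis by (simp add: Wl_def distinct_map del: upt_Suc)
qed

lemma distinct_concat_Wl:
  assumes xy: "x \<noteq> y"
  shows "\<forall>v\<in>set us. y \<notin># v \<Longrightarrow> distinct us \<Longrightarrow> distinct (concat (map (Wl x y) us))"
proof (induction us)
  case Nil then show ?case by simp
next
  case (Cons v us)
  have "set (Wl x y v) \<inter> set (concat (map (Wl x y) us)) = {}"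
    using Cons.prems set_concat_Wl[OF xy, of us] set_Wl[OF xy, of v] by (auto simp: pre_def)
  then show ?case using Cons distinct_Wl[OF xy] by simp
qed

definition lq :: "'v monomial list \<Rightarrow> bool" where
  "lq us \<longleftrightarrow> (\<forall>i. 0 < i \<and> i < length us \<longrightarrow>
           (\<exists>T. colon (mideal (set (take i us))) (us ! i) = mideal (mvar ` T)))"

lemma lq_Nil: "lq []" by (simp add: lq_def)

lemma lq_snoc: "lq (xs @ [u]) \<longleftrightarrow> lq xs \<and>
   (xs \<noteq> [] \<longrightarrow> (\<exists>T. colon (mideal (set xs)) u = mideal (mvar ` T)))"
proof
  assume h: "lq (xs @ [u])"
  have "lq xs" unfolding lq_def
  proof (intro allI impI)
    fix i assume i: "0 < i \<and> i < length xs"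
    then show "\<exists>T. colon (mideal (set (take i xs))) (xs ! i) = mideal (mvar ` T)"
      using h[unfolded lq_def, rule_format, of i] by (simp add: nth_append)
  qed
  moreover have "xs \<noteq> [] \<longrightarrow> (\<exists>T. colon (mideal (set xs)) u = mideal (mvar ` T))"
    using h[unfolded lq_def, rule_format, of "length xs"] by simp
  ultimately show "lq xs \<and> (xs \<noteq> [] \<longrightarrow> (\<exists>T. colon (mideal (set xs)) u = mideal (mvar ` T)))" ..
next
  assume h: "lq xs \<and> (xs \<noteq> [] \<longrightarrow> (\<exists>T. colon (mideal (set xs)) u = mideal (mvar ` T)))"
  show "lq (xs @ [u])" unfolding lq_def
  proof (intro allI impI)
    fix i assume i: "0 < i \<and> i < length (xs @ [u])"
    show "\<exists>T. colon (mideal (set (take i (xs @ [u])))) ((xs @ [u]) ! i) = mideal (mvar ` T)"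
    proof (cases "i < length xs")
      case True then show ?thesis using h[unfolded lq_def] i by (simp add: nth_append)
    next
      case False then have "i = length xs" using i by simp
      then show ?thesis using h i by simp
    qed
  qed
qed

lemma mideal_Un: "mideal (A \<union> B) = mideal A \<union> mideal B"
  by (auto simp: mideal_def)

lemma colon_Un: "colon (A \<union> B) u = colon A u \<union> colon B u"
  by (auto simp: colon_def)

lemma mideal_mvar: "mideal (mvar ` T) = {q. \<exists>c\<in>T. c \<in># q}"
  by (auto simp: mideal_def mvar_def)

lemma colon_pre:
  assumes xy: "x \<noteq> y" and yf: "yfree y H" and w: "psi x y w = v"
    and T: "colon (mideal H) v = mideal (mvar ` T)"
  shows "colon (mideal (pre x y H)) w = mideal (mvar ` ({c\<in>T. c \<noteq> y} \<union> {c. c = y \<and> x \<in> T}))"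
proof -
  have "colon (mideal (pre x y H)) w = {q. psi x y q \<in> colon (mideal H) v}"
    unfolding mideal_pre[OF xy yf] using w by (auto simp: colon_def pre_def psi_plus)
  also have "\<dots> = {q. \<exists>c\<in>T. c \<in># psi x y q}" unfolding T mideal_mvar by simp
  also have "\<dots> = mideal (mvar ` ({c\<in>T. c \<noteq> y} \<union> {c. c = y \<and> x \<in> T}))"
    unfolding mideal_mvar
  proof (intro Collect_cong iffI)
    fix q assume "\<exists>c\<in>T. c \<in># psi x y q"
    then obtain c where c: "c \<in> T" "0 < count (psi x y q) c" by auto
    show "\<exists>c\<in>{c \<in> T. c \<noteq> y} \<union> {c. c = y \<and> x \<in> T}. c \<in># q"
    proof (cases "c = x")
      case True
      then have "0 < count q x \<or> 0 < count q y" using c xy by (simp add: count_psi)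
      then show ?thesis using c True xy by auto
    next
      case False
      then have "c \<noteq> y" "0 < count q c" using c xy by (auto simp: count_psi split: if_splits)
      then show ?thesis using c by auto
    qed
  next
    fix q assume "\<exists>c\<in>{c \<in> T. c \<noteq> y} \<union> {c. c = y \<and> x \<in> T}. c \<in># q"
    then obtain c where c: "c \<in> {c \<in> T. c \<noteq> y} \<union> {c. c = y \<and> x \<in> T}" "0 < count q c" by auto
    show "\<exists>c\<in>T. c \<in># psi x y q"
    proof (cases "c = y")
      case True
      then have "x \<in> T" "0 < count (psi x y q) x" using c xy by (auto simp: count_psi)
      then show ?thesis by auto
    next
      case False
      then have "c \<in> T" "0 < count (psi x y q) c" using c xy by (auto simp: count_psi)
      then show ?thesis by auto
    qed
  qed
  finally show ?thesis .
qed

lemma colon_lifts: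
  assumes xy: "x \<noteq> y" and m: "m \<le> count v x"
  shows "colon (mideal (lift x y v ` {0..<m})) (lift x y v m) =
         mideal (mvar ` (if m = 0 then {} else {x}))"
proof (cases "m = 0")
  case True then show ?thesis by (simp add: colon_def mideal_def)
next
  case False
  have "q \<in> colon (mideal (lift x y v ` {0..<m})) (lift x y v m) \<longleftrightarrow> x \<in># q" for q
  proof
    assume "q \<in> colon (mideal (lift x y v ` {0..<m})) (lift x y v m)"
    then obtain l where l: "l < m" "lift x y v l \<subseteq># q + lift x y v m"
      by (auto simp: colon_def mideal_def)
    then have "count (lift x y v l) x \<le> count (q + lift x y v m) x"
      by (simp add: subseteq_mset_def)
    then have "count v x - l \<le> count q x + (count v x - m)" using xy by (simp add: count_lift)
    then have "count q x > 0" using l(1) m by linarith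
    then show "x \<in># q" by simp
  next
    assume "x \<in># q"
    then have qx: "count q x > 0" by simp
    have "lift x y v (m - 1) \<subseteq># q + lift x y v m"
      unfolding subseteq_mset_def
    proof
      fix z show "count (lift x y v (m - 1)) z \<le> count (q + lift x y v m) z"
      proof (cases "z = x")
        case True
        have "count v x - (m - 1) \<le> count q x + (count v x - m)" using qx m False by linarith
        then show ?thesis using True xy by (simp add: count_lift)
      qed (use xy in \<open>auto simp: count_lift\<close>)
    qed
    then show "q \<in> colon (mideal (lift x y v ` {0..<m})) (lift x y v m)"
      using False by (auto simp: colon_def mideal_def)
  qed
  then show ?thesis unfolding mideal_mvar using False by auto
qed



lemma psi_lift: "x \<noteq> y \<Longrightarrow> y \<notin># v \<Longrightarrow> k \<le> count v x \<Longrightarrow> psi x y (lift x y v k) = v"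
  by (auto simp: multiset_eq_iff count_psi count_lift not_in_iff)

lemma lq_main:
  assumes xy: "x \<noteq> y"
  shows "lq us \<Longrightarrow> \<forall>v\<in>set us. y \<notin># v \<Longrightarrow> lq (concat (map (Wl x y) us))"
proof (induction us rule: rev_induct)
  case Nil then show ?case by (simp add: lq_Nil)
next
  case (snoc v xs)
  have lqxs: "lq xs" and T0: "xs \<noteq> [] \<longrightarrow> (\<exists>T. colon (mideal (set xs)) v = mideal (mvar ` T))"
    using snoc.prems(1) lq_snoc by blast+
  obtain T where T: "colon (mideal (set xs)) v = mideal (mvar ` T)"
  proof (cases "xs = []")
    case True
    then show ?thesis using that[of "{}"] by (simp add: colon_def mideal_def)
  next
    case False then show ?thesis using T0 that by blast
  qed
  define A where "A = concat (map (Wl x y) xs)"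
  have lqA: "lq A" using snoc lqxs by (simp add: A_def)
  have yfx: "yfree y (set xs)" using snoc.prems by (simp add: yfree_def)
  have vy: "y \<notin># v" using snoc.prems by simp
  have setA: "set A = pre x y (set xs)" unfolding A_def
    using set_concat_Wl[OF xy] snoc.prems by simp
  have "m \<le> Suc (count v x) \<Longrightarrow> lq (A @ map (lift x y v) [0..<m])" for m
  proof (induction m)
    case 0 then show ?case using lqA by simp
  next
    case (Suc m)
    then have m: "m \<le> count v x" by simp
    have eq: "A @ map (lift x y v) [0..<Suc m] = (A @ map (lift x y v) [0..<m]) @ [lift x y v m]"
      by simp
    have "colon (mideal (set (A @ map (lift x y v) [0..<m]))) (lift x y v m) =
          colon (mideal (pre x y (set xs))) (lift x y v m) \<union>
          colon (mideal (lift x y v ` {0..<m})) (lift x y v m)"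
      by (simp add: setA mideal_Un colon_Un)
    also have "\<dots> = mideal (mvar ` ({c\<in>T. c \<noteq> y} \<union> {c. c = y \<and> x \<in> T})) \<union>
        mideal (mvar ` (if m = 0 then {} else {x}))"
      using colon_pre[OF xy yfx psi_lift[OF xy vy m] T] colon_lifts[OF xy m] by simp
    also have "\<dots> = mideal (mvar ` ({c\<in>T. c \<noteq> y} \<union> {c. c = y \<and> x \<in> T} \<union>
        (if m = 0 then {} else {x})))"
      by (simp only: image_Un mideal_Un)
    finally have "\<exists>C. colon (mideal (set (A @ map (lift x y v) [0..<m]))) (lift x y v m) = mideal (mvar ` C)"
      by blast
    then show ?case unfolding eq lq_snoc using Suc by simp
  qed
  then have "lq (A @ map (lift x y v) [0..<Suc (count v x)])" by blast
  moreover have "concat (map (Wl x y) (xs @ [v])) = A @ map (lift x y v) [0..<Suc (count v x)]"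
    by (simp add: A_def Wl_def[of x y v] del: upt_Suc)
  ultimately show ?case by simp
qed

theorem proposition2p3:
  fixes I :: "'v monomial set" and x y :: 'v and s :: nat
  assumes "is_monomial_ideal I"
    and "squarefree_mideal I"
    and "equigenerated I"
    and "x \<noteq> y"
    and "\<forall>u\<in>mingens I. y \<notin># u"
    and "0 < s"
    and "linear_quotients (mpow I s)"
  shows "linear_quotients (mpow (duplicate I x y) s)"
proof -
  note mg = mingens_mpow_dup[OF assms(1,2,4,5), of s]
  obtain us where us: "distinct us" "set us = mingens (mpow I s)" "lq us"
    using assms(7) unfolding linear_quotients_def lq_def by blast
  have yu: "\<forall>v\<in>set us. y \<notin># v" using mg(2) us(2) by (simp add: yfree_def)
  define ws where "ws = concat (map (Wl x y) us)"
  have "distinct ws" unfolding ws_def using distinct_concat_Wl[OF assms(4) yu us(1)] .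
  moreover have "set ws = mingens (mpow (duplicate I x y) s)"
    unfolding ws_def set_concat_Wl[OF assms(4) yu] mg(1) us(2) ..
  moreover have "lq ws" unfolding ws_def using lq_main[OF assms(4) us(3) yu] .
  ultimately show ?thesis unfolding linear_quotients_def lq_def by blast
qed


end
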